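(* Consider the unbounded variant of the reserve price problem with $n=2$ samples, $d=2$ features and $X=\mathbb{R}^2$: $\max_{\beta\in\mathbb{R}^2}\frac12\sum_{i=1}^2 r(w^i\cdot\beta;b_i^{(1)},b_i^{(2)})$. There exists a sequence of such instances in which all problem data ($w^1,w^2\in\mathbb{R}^2$ with $\|w^1\|_2,\|w^2\|_2\le 1$, and bids $b_i^{(1)},b_i^{(2)}\in[0,1]$) are bounded in magnitude by one, each instance has a unique optimal solution $\beta^*$, and $\|\beta^*\|$ grows arbitrarily large along the sequence.
   Context: The reward function is $r(v;b^{(1)},b^{(2)})=b^{(2)}$ if $v\le b^{(2)}$, $=v$ if $b^{(2)}<v\le b^{(1)}$, and $=0$ if $v>b^{(1)}$, for bids $b^{(1)}\ge b^{(2)}\ge0$. *)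

theory Defs
  imports "HOL-Analysis.Analysis"
begin

text \<open>Reward of reserve price v given highest bid b1 and second bid b2 (b1 \<ge> b2 \<ge> 0).\<close>
definition reward :: "real \<Rightarrow> real \<Rightarrow> real \<Rightarrow> real" where
  "reward v b1 b2 = (if v \<le> b2 then b2 else if v \<le> b1 then v else 0)"

definition rp_obj :: "real^2 \<Rightarrow> real^2 \<Rightarrow> real \<Rightarrow> real \<Rightarrow> real \<Rightarrow> real \<Rightarrow> real^2 \<Rightarrow> real" where
  "rp_obj w1 w2 b11 b12 b21 b22 \<beta> =
     (1/2) * (reward (w1 \<bullet> \<beta>) b11 b12 + reward (w2 \<bullet> \<beta>) b21 b22)"

end

theory Submission
  imports Defs
begin

definition V :: "real \<Rightarrow> real \<Rightarrow> real^2" where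
  "V a b = (\<chi> i. if i = 1 then a else b)"

lemma V_nth1[simp]: "V a b $ 1 = a" by (simp add: V_def)
lemma V_nth2[simp]: "V a b $ 2 = b" by (simp add: V_def)

lemma inner_V: "V a b \<bullet> x = a * x$1 + b * x$2"
  by (simp add: inner_vec_def sum_2)

lemma norm_V: "norm (V a b) = sqrt (a^2 + b^2)"
  by (simp add: norm_vec_def L2_set_def sum_2 power2_eq_square)

lemma reward_le: "0 \<le> b1 \<Longrightarrow> reward v b1 0 \<le> b1"
  by (simp add: reward_def)

lemma reward_eq: "0 < b1 \<Longrightarrow> reward v b1 0 = b1 \<longleftrightarrow> v = b1"
  by (auto simp: reward_def)

theorem proposition4:
  "\<exists>(w1 :: nat \<Rightarrow> real^2) (w2 :: nat \<Rightarrow> real^2) (b11 :: nat \<Rightarrow> real) (b12 :: nat \<Rightarrow> real)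
      (b21 :: nat \<Rightarrow> real) (b22 :: nat \<Rightarrow> real) (\<beta> :: nat \<Rightarrow> real^2).
     (\<forall>k. norm (w1 k) \<le> 1 \<and> norm (w2 k) \<le> 1 \<and>
          0 \<le> b12 k \<and> b12 k \<le> b11 k \<and> b11 k \<le> 1 \<and>
          0 \<le> b22 k \<and> b22 k \<le> b21 k \<and> b21 k \<le> 1 \<and>
          (\<forall>\<gamma>. rp_obj (w1 k) (w2 k) (b11 k) (b12 k) (b21 k) (b22 k) \<gamma>
                 \<le> rp_obj (w1 k) (w2 k) (b11 k) (b12 k) (b21 k) (b22 k) (\<beta> k)) \<and>
          (\<forall>\<gamma>. (\<forall>\<delta>. rp_obj (w1 k) (w2 k) (b11 k) (b12 k) (b21 k) (b22 k) \<delta>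
                      \<le> rp_obj (w1 k) (w2 k) (b11 k) (b12 k) (b21 k) (b22 k) \<gamma>) \<longrightarrow> \<gamma> = \<beta> k))
     \<and> filterlim (\<lambda>k. norm (\<beta> k)) at_top sequentially"
proof -
  define e :: "nat \<Rightarrow> real" where "e k = 1 / (2 * real k + 2)" for k
  define w1 :: "nat \<Rightarrow> real^2" where "w1 k = V (1/2) 0" for k
  define w2 :: "nat \<Rightarrow> real^2" where "w2 k = V (1/2) (e k)" for k
  define \<beta> :: "nat \<Rightarrow> real^2" where "\<beta> k = V 2 (- (real k + 1))" for k
  have epos: "0 < e k" "e k \<le> 1/2" for k by (auto simp: e_def field_simps)
  have main: "rp_obj (w1 k) (w2 k) 1 0 (1/2) 0 \<gamma> \<le> 3/4 \<and>
     (rp_obj (w1 k) (w2 k) 1 0 (1/2) 0 \<gamma> = 3/4 \<longleftrightarrow> \<gamma> = \<beta> k)" for k \<gamma>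
  proof -
    have r1: "reward (w1 k \<bullet> \<gamma>) 1 0 \<le> 1" and r2: "reward (w2 k \<bullet> \<gamma>) (1/2) 0 \<le> 1/2"
      using reward_le[of 1] reward_le[of "1/2"] by auto
    have "rp_obj (w1 k) (w2 k) 1 0 (1/2) 0 \<gamma> = 3/4 \<longleftrightarrow>
          reward (w1 k \<bullet> \<gamma>) 1 0 = 1 \<and> reward (w2 k \<bullet> \<gamma>) (1/2) 0 = 1/2"
      using r1 r2 by (auto simp: rp_obj_def)
    also have "\<dots> \<longleftrightarrow> w1 k \<bullet> \<gamma> = 1 \<and> w2 k \<bullet> \<gamma> = 1/2"
      using reward_eq[of 1 "w1 k \<bullet> \<gamma>"] reward_eq[of "1/2" "w2 k \<bullet> \<gamma>"] by simp
    also have "\<dots> \<longleftrightarrow> \<gamma> = \<beta> k"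
    proof
      assume h: "w1 k \<bullet> \<gamma> = 1 \<and> w2 k \<bullet> \<gamma> = 1/2"
      hence g1: "\<gamma>$1 = 2" by (simp add: w1_def inner_V)
      with h have "1 + e k * \<gamma>$2 = 1/2" by (simp add: w2_def inner_V)
      hence "\<gamma>$2 = -(real k + 1)" using epos(1)[of k]
        by (simp add: e_def field_simps)
      with g1 show "\<gamma> = \<beta> k"
        by (simp add: vec_eq_iff forall_2 \<beta>_def)
    next
      assume "\<gamma> = \<beta> k"
      thus "w1 k \<bullet> \<gamma> = 1 \<and> w2 k \<bullet> \<gamma> = 1/2"
        by (simp add: w1_def w2_def \<beta>_def inner_V e_def field_simps)
    qed
    finally show ?thesis using r1 r2 by (auto simp: rp_obj_def)
  qed
  have opt: "rp_obj (w1 k) (w2 k) 1 0 (1/2) 0 (\<beta> k) = 3/4" for k using main by blast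
  have n1: "norm (w1 k) \<le> 1" for k by (simp add: w1_def norm_V)
  have n2: "norm (w2 k) \<le> 1" for k
  proof -
    have "(1/2)^2 + (e k)^2 \<le> (1::real)"
    proof -
      have "(e k)^2 \<le> (1/2)^2" using epos[of k] by (intro power_mono) auto
      thus ?thesis by (simp add: power2_eq_square)
    qed
    thus ?thesis by (simp add: w2_def norm_V real_sqrt_le_1_iff)
  qed
  have lim: "filterlim (\<lambda>k. norm (\<beta> k)) at_top sequentially"
  proof (rule filterlim_at_top_mono[OF filterlim_real_sequentially])
    show "\<forall>\<^sub>F k in sequentially. real k \<le> norm (\<beta> k)"
    proof (rule always_eventually, rule allI)
      fix k
      have "real k \<le> \<bar>\<beta> k $ 2\<bar>" by (simp add: \<beta>_def)
      also have "\<dots> \<le> norm (\<beta> k)" by (rule component_le_norm_cart)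
      finally show "real k \<le> norm (\<beta> k)" .
    qed
  qed
  show ?thesis
    apply (rule exI[of _ w1], rule exI[of _ w2], rule exI[of _ "\<lambda>_. 1"], rule exI[of _ "\<lambda>_. 0"],
           rule exI[of _ "\<lambda>_. 1/2"], rule exI[of _ "\<lambda>_. 0"], rule exI[of _ \<beta>])
    apply (intro conjI allI impI lim n1 n2)
    apply (simp_all only: opt)
    apply (simp_all)
    subgoal for k \<gamma> using main[of k \<gamma>] by linarith
    subgoal for k \<gamma>
    proof -
      assume h: "\<forall>\<delta>. rp_obj (w1 k) (w2 k) 1 0 (1 / 2) 0 \<delta> \<le> rp_obj (w1 k) (w2 k) 1 0 (1 / 2) 0 \<gamma>"
      have "3/4 \<le> rp_obj (w1 k) (w2 k) 1 0 (1 / 2) 0 \<gamma>" using h[rule_format, of "\<beta> k"] opt[of k] by simp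
      hence "rp_obj (w1 k) (w2 k) 1 0 (1 / 2) 0 \<gamma> = 3/4" using main[of k \<gamma>] by linarith
      thus "\<gamma> = \<beta> k" using main[of k \<gamma>] by blast
    qed
    done
qed

end
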